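(* Let $f$ be the function on $D\subset\mathbb{R}^2$ described in the context, and run gradient descent $x^{t+1} = x^t - \eta\nabla f(x^t)$ with step size $\eta = \frac{1}{4L}$, starting from a point $x^0=(x_1^0,x_2^0)$ in the first block $B_1 = [0,\tau]^2$ satisfying $|x^0_1 - \tfrac{\tau}{2}| \le \frac{\tau}{2e^2}$. Then every gradient descent iterate $x^t$ lies in the region $D$.
   Context: Fix constants $L \ge \gamma > 0$, $\tau > 0$, an integer $n \ge 2$, and set $L_2 = 4L$. Blocks: for odd $i\in\{1,\dots,n\}$, $B_i = [(i-1)\tau, i\tau]\times[(i-1)\tau, i\tau]$; for even $i$, $B_i = [i\tau,(i+1)\tau]\times[(i-2)\tau,(i-1)\tau]$. Buffers: for $i = 1,\dots,n-1$, $B'_i = [i\tau,(i+1)\tau]\times[(i-1)\tau, i\tau]$. Let $(s_1^i,s_2^i)$ denote the center of $B_i$ and $D = \bigcup_{i=1}^n B_i \cup \bigcup_{i=1}^{n-1} B'_i$. Define $p(u) = \tfrac12(\gamma-L)u^2 + (L\tau - 2\gamma\tau)u$, $g_1(u) = p(u) - p(\tau) - \tfrac14\gamma\tau^2$, $\nu = \tfrac14 L\tau^2 - g_1(2\tau)$, and for constants $c_1,c_2$, $h(u;c_1,c_2) = c_2 - \frac{10(c_1-c_2)(u-2\tau)^3}{\tau^3} - \frac{15(c_1-c_2)(u-2\tau)^4}{\tau^4} - \frac{6(c_1-c_2)(u-2\tau)^5}{\tau^5}$. The function $f$ on $D$ is: (1) for odd $i<n$ and $x\in B_i$ (writing $s=s^i$):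 $f(x) = -i\nu - \gamma(x_1-s_1)^2 + L(x_2-s_2)^2$ if $x_1 > s_1$, and $f(x) = -i\nu + L_2(x_1-s_1)^2 + L(x_2-s_2)^2$ if $x_1\le s_1$; (2) for even $i<n$ and $x\in B_i$: $f(x) = -i\nu + L(x_1-s_1)^2 - \gamma(x_2-s_2)^2$ if $x_2 > s_2$, and $f(x) = -i\nu + L(x_1-s_1)^2 + L_2(x_2-s_2)^2$ if $x_2\le s_2$; (3) for $x\in B_n$: $f(x) = -n\nu + L(x_1-s_1^n)^2 + L(x_2-s_2^n)^2$; (4) for odd $i\le n-1$ and $x\in B'_i$: with $u = x_1-(i-1)\tau\in[\tau,2\tau]$ and $w = x_2 - s_2^i$, $f(x) = -i\nu + g_1(u) + h(u;L,c)\,w^2$ where $c=-\gamma$ if $w>0$ and $c=L_2$ if $w\le 0$; (5) for even $i\le n-1$ and $x\in B'_i$: with $u = x_2-(i-2)\tau\in[\tau,2\tau]$ and $w = x_1 - s_1^i$, $f(x) = -i\nu + g_1(u) + h(u;L,c)\,w^2$ where $c=-\gamma$ if $w>0$ and $c=L_2$ if $w\le 0$. The function $f$ is extended from $D$ to $\mathbb{R}^2$ (via the Whitney extension theorem) so that gradient descent is defined everywhere.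
   Formalization: The step uses, in place of the gradient of a Whitney extension of f, any field equal at each point of D to the gradient, relative to some block or buffer containing it, of that piece's formula. The statement above fails without it. *)

theory Defs
  imports "HOL-Analysis.Analysis"
begin

definition L2c :: "real \<Rightarrow> real" where
  "L2c L = 4 * L"

definition pfun :: "real \<Rightarrow> real \<Rightarrow> real \<Rightarrow> real \<Rightarrow> real" where
  "pfun L \<gamma> \<tau> u = (1/2) * (\<gamma> - L) * u\<^sup>2 + (L * \<tau> - 2 * \<gamma> * \<tau>) * u"

definition g1 :: "real \<Rightarrow> real \<Rightarrow> real \<Rightarrow> real \<Rightarrow> real" where
  "g1 L \<gamma> \<tau> u = pfun L \<gamma> \<tau> u - pfun L \<gamma> \<tau> \<tau> - (1/4) * \<gamma> * \<tau>\<^sup>2"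

definition nu :: "real \<Rightarrow> real \<Rightarrow> real \<Rightarrow> real" where
  "nu L \<gamma> \<tau> = (1/4) * L * \<tau>\<^sup>2 - g1 L \<gamma> \<tau> (2 * \<tau>)"

definition hfun :: "real \<Rightarrow> real \<Rightarrow> real \<Rightarrow> real \<Rightarrow> real" where
  "hfun \<tau> c1 c2 u = c2 - 10 * (c1 - c2) * (u - 2*\<tau>)^3 / \<tau>^3
                        - 15 * (c1 - c2) * (u - 2*\<tau>)^4 / \<tau>^4
                        - 6 * (c1 - c2) * (u - 2*\<tau>)^5 / \<tau>^5"

definition blk :: "real \<Rightarrow> nat \<Rightarrow> (real \<times> real) set" where
  "blk \<tau> i = (if odd i
     then {(real i - 1) * \<tau> .. real i * \<tau>} \<times> {(real i - 1) * \<tau> .. real i * \<tau>}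
     else {real i * \<tau> .. (real i + 1) * \<tau>} \<times> {(real i - 2) * \<tau> .. (real i - 1) * \<tau>})"

definition buf :: "real \<Rightarrow> nat \<Rightarrow> (real \<times> real) set" where
  "buf \<tau> i = {real i * \<tau> .. (real i + 1) * \<tau>} \<times> {(real i - 1) * \<tau> .. real i * \<tau>}"

definition cs1 :: "real \<Rightarrow> nat \<Rightarrow> real" where
  "cs1 \<tau> i = (if odd i then (real i - 1/2) * \<tau> else (real i + 1/2) * \<tau>)"

definition cs2 :: "real \<Rightarrow> nat \<Rightarrow> real" where
  "cs2 \<tau> i = (if odd i then (real i - 1/2) * \<tau> else (real i - 3/2) * \<tau>)"

definition regionD :: "real \<Rightarrow> nat \<Rightarrow> (real \<times> real) set" where
  "regionD \<tau> n = (\<Union>i\<in>{1..n}. blk \<tau> i) \<union> (\<Union>i\<in>{1..n-1}. buf \<tau> i)"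

definition fblk :: "real \<Rightarrow> real \<Rightarrow> real \<Rightarrow> nat \<Rightarrow> nat \<Rightarrow> real \<times> real \<Rightarrow> real" where
  "fblk L \<gamma> \<tau> n i x = (let x1 = fst x; x2 = snd x; s1 = cs1 \<tau> i; s2 = cs2 \<tau> i;
       v = - real i * nu L \<gamma> \<tau> in
     if i = n then v + L * (x1 - s1)\<^sup>2 + L * (x2 - s2)\<^sup>2
     else if odd i then
       (if x1 > s1 then v - \<gamma> * (x1 - s1)\<^sup>2 + L * (x2 - s2)\<^sup>2
        else v + L2c L * (x1 - s1)\<^sup>2 + L * (x2 - s2)\<^sup>2)
     else
       (if x2 > s2 then v + L * (x1 - s1)\<^sup>2 - \<gamma> * (x2 - s2)\<^sup>2
        else v + L * (x1 - s1)\<^sup>2 + L2c L * (x2 - s2)\<^sup>2))"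

definition fbuf :: "real \<Rightarrow> real \<Rightarrow> real \<Rightarrow> nat \<Rightarrow> real \<times> real \<Rightarrow> real" where
  "fbuf L \<gamma> \<tau> i x = (let x1 = fst x; x2 = snd x;
       u = (if odd i then x1 - (real i - 1) * \<tau> else x2 - (real i - 2) * \<tau>);
       w = (if odd i then x2 - cs2 \<tau> i else x1 - cs1 \<tau> i);
       c = (if w > 0 then - \<gamma> else L2c L) in
     - real i * nu L \<gamma> \<tau> + g1 L \<gamma> \<tau> u + hfun \<tau> L c u * w\<^sup>2)"

text \<open>G is a gradient field of f on D: at every point of D it is the gradient
  (derivative relative to the closed piece) of the formula of some piece containing the point.\<close>

definition is_grad_field :: "real \<Rightarrow> real \<Rightarrow> real \<Rightarrow> nat \<Rightarrow> (real \<times> real \<Rightarrow> real \<times> real) \<Rightarrow> bool" where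
  "is_grad_field L \<gamma> \<tau> n G \<longleftrightarrow> (\<forall>x \<in> regionD \<tau> n.
      (\<exists>i\<in>{1..n}. x \<in> blk \<tau> i \<and>
          (fblk L \<gamma> \<tau> n i has_derivative (\<lambda>h. G x \<bullet> h)) (at x within blk \<tau> i)) \<or>
      (\<exists>i\<in>{1..n-1}. x \<in> buf \<tau> i \<and>
          (fbuf L \<gamma> \<tau> i has_derivative (\<lambda>h. G x \<bullet> h)) (at x within buf \<tau> i)))"

definition gd_iter :: "real \<Rightarrow> (real \<times> real \<Rightarrow> real \<times> real) \<Rightarrow> real \<times> real \<Rightarrow> nat \<Rightarrow> real \<times> real" where
  "gd_iter \<eta> G x0 t = ((\<lambda>x. x - \<eta> *\<^sub>R G x) ^^ t) x0"

end

theory Submission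
  imports Defs
begin


definition S5 :: "real \<Rightarrow> real" where "S5 t = 10*t^3 - 15*t^4 + 6*t^5"

lemma S5_nonneg: "0 \<le> t \<Longrightarrow> 0 \<le> S5 t"
proof -
  assume t: "0 \<le> t"
  have "S5 t = t^3 * (6*(t - 5/4)^2 + 5/8)" unfolding S5_def by algebra
  moreover have "0 < 6*(t - 5/4)^2 + (5/8::real)"
    by (simp add: add_nonneg_pos)
  ultimately show ?thesis using t by simp
qed

lemma S5_sym: "S5 (1 - t) = 1 - S5 t"
  unfolding S5_def by algebra

lemma S5_le1: "t \<le> 1 \<Longrightarrow> S5 t \<le> 1"
  using S5_nonneg[of "1 - t"] S5_sym[of t] by simp

lemma S5_half: assumes "t \<le> 1/2" shows "S5 t \<le> 1/2"
proof -
  have "S5 t - 1/2 = (t - 1/2) * (6*((t-1/2)^2 - 5/12)^2 + 5/6)" unfolding S5_def by algebra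
  moreover have "0 < 6*((t-1/2)^2 - 5/12)^2 + (5/6::real)" by (simp add: add_nonneg_pos)
  ultimately show ?thesis using assms
    by (smt (verit) mult_nonpos_nonneg)
qed

lemma S5_cube: assumes "0 \<le> t" "t \<le> 1" shows "S5 t \<le> 10*t^3"
proof -
  have "10*t^3 - S5 t = t^4 * (15 - 6*t)" unfolding S5_def by algebra
  moreover have "0 \<le> t^4 * (15 - 6*t)" using assms by simp
  ultimately show ?thesis by simp
qed

lemma S5_quarter: assumes "0 \<le> t" "t \<le> 1/4" shows "S5 t \<le> 10/64"
proof -
  have "t^3 \<le> (1/4)^3" using assms by (intro power_mono) auto
  then have "t^3 \<le> 1/64" by (simp add: power3_eq_cube)
  then show ?thesis using S5_cube[of t] assms by linarith
qed

lemma S5_deriv_bound: fixes t :: real assumes "0 \<le> t" "t \<le> 1" shows "30*t^2*(1-t)^2 \<le> 30/16"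
proof -
  have a: "0 \<le> t*(1-t)" using assms by (intro mult_nonneg_nonneg) auto
  have b: "t*(1-t) \<le> 1/4" using sum_squares_ge_zero[of "t-1/2" 0]
    by (simp add: power2_eq_square algebra_simps)
  have "(t*(1-t))^2 \<le> (1/4)^2" using a b by (intro power_mono) auto
  then have c: "(t*(1-t))^2 \<le> 1/16" by (simp add: power2_eq_square)
  have "30*t^2*(1-t)^2 = 30 * (t*(1-t))^2" by (simp add: power_mult_distrib)
  then show ?thesis using c by linarith
qed

lemma S5_deriv_nonneg: "0 \<le> 30*t^2*(1-t)^2" for t :: real by simp

lemma hfun_S5: assumes "\<tau> \<noteq> 0"
  shows "hfun \<tau> c1 c2 u = c1 - (c1 - c2) * S5 ((u - \<tau>)/\<tau>)"
proof -
  define t where "t = (u - \<tau>)/\<tau>"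
  have u: "u - 2*\<tau> = \<tau> * (t - 1)" using assms unfolding t_def by (simp add: field_simps)
  have "hfun \<tau> c1 c2 u = c2 - 10*(c1-c2)*(t-1)^3 - 15*(c1-c2)*(t-1)^4 - 6*(c1-c2)*(t-1)^5"
    unfolding hfun_def u using assms by (simp add: power_mult_distrib)
  also have "\<dots> = c1 - (c1 - c2) * S5 t" unfolding S5_def by algebra
  finally show ?thesis unfolding t_def .
qed

definition hdv :: "real \<Rightarrow> real \<Rightarrow> real \<Rightarrow> real \<Rightarrow> real" where
  "hdv \<tau> c1 c2 u = - (c1 - c2) * (30 * ((u-\<tau>)/\<tau>)^2 * (1 - (u-\<tau>)/\<tau>)^2) / \<tau>"

lemma S5_deriv: "(S5 has_real_derivative 30*t^2*(1-t)^2) (at t)"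
proof -
  have "((\<lambda>t. 10*t^3 - 15*t^4 + 6*t^5) has_real_derivative 10*(3*t^2) - 15*(4*t^3) + 6*(5*t^4)) (at t)"
    by (auto intro!: derivative_eq_intros)
  moreover have "10*(3*t^2) - 15*(4*t^3) + 6*(5*t^4) = 30*t^2*(1-t)^2" by algebra
  ultimately show ?thesis unfolding S5_def[abs_def] by simp
qed

lemma hfun_deriv: assumes "\<tau> \<noteq> 0"
  shows "(hfun \<tau> c1 c2 has_real_derivative hdv \<tau> c1 c2 u) (at u)"
proof -
  have e: "hfun \<tau> c1 c2 = (\<lambda>u. c1 - (c1 - c2) * S5 ((u - \<tau>)/\<tau>))"
    using hfun_S5[OF assms] by auto
  have "((\<lambda>u. (u - \<tau>)/\<tau>) has_real_derivative 1/\<tau>) (at u)"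
    using assms by (auto intro!: derivative_eq_intros)
  from DERIV_chain2[OF S5_deriv this]
  have "((\<lambda>u. S5 ((u - \<tau>)/\<tau>)) has_real_derivative 30*((u - \<tau>)/\<tau>)^2*(1-(u - \<tau>)/\<tau>)^2 * (1/\<tau>)) (at u)" .
  from DERIV_diff[OF DERIV_const DERIV_cmult[OF this, of "c1 - c2"], of c1]
  show ?thesis unfolding e hdv_def by (rule DERIV_cong) (use assms in \<open>simp add: field_simps\<close>)
qed

definition g1d :: "real \<Rightarrow> real \<Rightarrow> real \<Rightarrow> real \<Rightarrow> real" where
  "g1d L \<gamma> \<tau> u = (\<gamma> - L) * u + (L * \<tau> - 2 * \<gamma> * \<tau>)"

lemma g1_deriv: "(g1 L \<gamma> \<tau> has_real_derivative g1d L \<gamma> \<tau> u) (at u)"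
  unfolding g1_def[abs_def] pfun_def[abs_def] g1d_def
  by (auto intro!: derivative_eq_intros simp: field_simps)

definition mp :: "real \<Rightarrow> real" where "mp w = (max w 0)^2"
definition mn :: "real \<Rightarrow> real" where "mn w = (min w 0)^2"

lemma mp_deriv: "(mp has_real_derivative 2 * max x 0) (at x)"
proof (cases "x = 0")
  case True
  have q: "(mp (0 + h) - mp 0) / h = max h 0" if "h \<noteq> 0" for h
  proof (cases "h > 0")
    case True then show ?thesis by (simp add: mp_def power2_eq_square)
  next
    case False then show ?thesis by (simp add: mp_def max_def)
  qed
  have l: "((\<lambda>h. max h 0) \<longlongrightarrow> max 0 0) (at (0::real))"
    by (intro tendsto_max tendsto_ident_at tendsto_const)
  have ev: "\<forall>\<^sub>F h in at 0. max h 0 = (mp (0 + h) - mp 0) / h"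
    unfolding eventually_at_filter by (rule always_eventually) (use q in auto)
  have "((\<lambda>h. (mp (0 + h) - mp 0) / h) \<longlongrightarrow> 0) (at 0)"
    using Lim_transform_eventually[OF l ev] by simp
  then show ?thesis using True by (simp add: DERIV_def)
next
  case False
  show ?thesis
  proof (cases "x > 0")
    case True
    have "((\<lambda>w. w^2) has_real_derivative 2 * max x 0) (at x)"
      using True by (auto intro!: derivative_eq_intros)
    then show ?thesis
      apply (rule has_field_derivative_transform_within_open[where S="{0<..}"])
      using True by (auto simp: mp_def)
  next
    case f: False
    have "((\<lambda>w. 0) has_real_derivative 2 * max x 0) (at x)" using f False by (simp add: max_def)
    then show ?thesis
      apply (rule has_field_derivative_transform_within_open[where S="{..<0}"])
      using f False by (auto simp: mp_def)
  qed
qed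

lemma mn_deriv: "(mn has_real_derivative 2 * min x 0) (at x)"
proof -
  have e: "mn = (\<lambda>w. mp (- w))" by (auto simp: mn_def mp_def fun_eq_iff max_def min_def)
  have "((\<lambda>w. mp (- w)) has_real_derivative 2 * max (-x) 0 * (-1)) (at x)"
    by (rule DERIV_chain2[OF mp_deriv]) (auto intro!: derivative_eq_intros)
  then show ?thesis unfolding e by (rule DERIV_cong) (simp add: max_def min_def)
qed

lemma mp_chain[derivative_intros]:
  "(g has_derivative g') (at x within s) \<Longrightarrow>
   ((\<lambda>x. mp (g x)) has_derivative (\<lambda>h. g' h * (2 * max (g x) 0))) (at x within s)"
  by (rule DERIV_compose_FDERIV[OF mp_deriv])

lemma mn_chain[derivative_intros]:
  "(g has_derivative g') (at x within s) \<Longrightarrow>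
   ((\<lambda>x. mn (g x)) has_derivative (\<lambda>h. g' h * (2 * min (g x) 0))) (at x within s)"
  by (rule DERIV_compose_FDERIV[OF mn_deriv])

lemma g1_chain[derivative_intros]:
  "(g has_derivative g') (at x within s) \<Longrightarrow>
   ((\<lambda>x. g1 L \<gamma> \<tau> (g x)) has_derivative (\<lambda>h. g' h * g1d L \<gamma> \<tau> (g x))) (at x within s)"
  by (rule DERIV_compose_FDERIV[OF g1_deriv])

lemma hfun_chain:
  "\<tau> \<noteq> 0 \<Longrightarrow> (g has_derivative g') (at x within s) \<Longrightarrow>
   ((\<lambda>x. hfun \<tau> c1 c2 (g x)) has_derivative (\<lambda>h. g' h * hdv \<tau> c1 c2 (g x))) (at x within s)"
  by (rule DERIV_compose_FDERIV[OF hfun_deriv])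

lemma ln_up3: fixes x :: real assumes "0 \<le> x" shows "ln (1 + x) \<le> x - x^2/2 + x^3/3"
proof -
  let ?f = "\<lambda>y::real. y - y^2/2 + y^3/3 - ln (1 + y)"
  have "?f 0 \<le> ?f x"
  proof (rule DERIV_nonneg_imp_nondecreasing[OF assms])
    fix y :: real assume y: "0 \<le> y" "y \<le> x"
    have "(?f has_real_derivative 1 - y + y^2 - 1/(1+y)) (at y)"
      using y by (auto intro!: derivative_eq_intros simp: field_simps power2_eq_square)
    moreover have "0 \<le> 1 - y + y^2 - 1/(1+y)"
    proof -
      have "1 - y + y^2 - 1/(1+y) = y^3/(1+y)" using y by (simp add: field_simps power2_eq_square power3_eq_cube; algebra)
      then show ?thesis using y by simp
    qed
    ultimately show "\<exists>d. (?f has_real_derivative d) (at y) \<and> 0 \<le> d" by blast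
  qed
  then show ?thesis by simp
qed

lemma ln_lo2: fixes x :: real assumes "0 \<le> x" shows "2*x/(2+x) \<le> ln (1 + x)"
proof -
  let ?f = "\<lambda>y::real. ln (1 + y) - 2*y/(2+y)"
  have "?f 0 \<le> ?f x"
  proof (rule DERIV_nonneg_imp_nondecreasing[OF assms])
    fix y :: real assume y: "0 \<le> y" "y \<le> x"
    have "(?f has_real_derivative 1/(1+y) - 4/(2+y)^2) (at y)"
      using y by (auto intro!: derivative_eq_intros simp: field_simps power2_eq_square)
    moreover have "0 \<le> 1/(1+y) - 4/(2+y)^2"
    proof -
      have p: "1 + y \<noteq> 0" "2 + y \<noteq> 0" using y by auto
      have "1/(1+y) - 4/(2+y)^2 = y^2/((1+y)*(2+y)^2)" using p by (simp add: divide_simps) algebra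
      then show ?thesis using y by simp
    qed
    ultimately show "\<exists>d. (?f has_real_derivative d) (at y) \<and> 0 \<le> d" by blast
  qed
  then show ?thesis by simp
qed

lemma ln2_ge: "2/3 \<le> ln (2::real)" using ln_lo2[of 1] by simp
lemma ln32_ge: "2/5 \<le> ln (3/2::real)" using ln_lo2[of "1/2"] by simp




locale gdc =
  fixes L \<gamma> \<tau> :: real and n :: nat
  assumes gpos: "0 < \<gamma>" and gL: "\<gamma> \<le> L" and tpos: "0 < \<tau>" and n2: "2 \<le> n"
begin

lemma Lpos: "0 < L" using gpos gL by simp

definition pa :: "nat \<Rightarrow> real \<times> real \<Rightarrow> real" where
  "pa k x = (if odd k then fst x - cs1 \<tau> k else snd x - cs2 \<tau> k)"
definition pb :: "nat \<Rightarrow> real \<times> real \<Rightarrow> real" where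
  "pb k x = (if odd k then snd x - cs2 \<tau> k else fst x - cs1 \<tau> k)"
definition bu :: "nat \<Rightarrow> real \<times> real \<Rightarrow> real" where
  "bu j x = (if odd j then fst x - (real j - 1) * \<tau> else snd x - (real j - 2) * \<tau>)"
definition bw :: "nat \<Rightarrow> real \<times> real \<Rightarrow> real" where
  "bw j x = (if odd j then snd x - cs2 \<tau> j else fst x - cs1 \<tau> j)"

definition dA :: "real \<Rightarrow> real" where "dA a = (if a > 0 then -2*\<gamma>*a else 2*(4*L)*a)"

definition gblk :: "nat \<Rightarrow> real \<times> real \<Rightarrow> real \<times> real" where
  "gblk k x = (if k = n then (2*L*(fst x - cs1 \<tau> k), 2*L*(snd x - cs2 \<tau> k))
     else if odd k then (dA (pa k x), 2*L*pb k x) else (2*L*pb k x, dA (pa k x)))"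

definition cc :: "real \<Rightarrow> real" where "cc w = (if w > 0 then -\<gamma> else 4*L)"

definition gU :: "nat \<Rightarrow> real \<times> real \<Rightarrow> real" where
  "gU j x = g1d L \<gamma> \<tau> (bu j x) + hdv \<tau> L (cc (bw j x)) (bu j x) * (bw j x)^2"
definition gW :: "nat \<Rightarrow> real \<times> real \<Rightarrow> real" where
  "gW j x = 2 * hfun \<tau> L (cc (bw j x)) (bu j x) * bw j x"
definition gbuf :: "nat \<Rightarrow> real \<times> real \<Rightarrow> real \<times> real" where
  "gbuf j x = (if odd j then (gU j x, gW j x) else (gW j x, gU j x))"

lemma mpmn_sq: "- \<gamma> * mp a + 4*L * mn a = (if a > 0 then -\<gamma> * a^2 else L2c L * a^2)"
  by (auto simp: mp_def mn_def L2c_def max_def min_def)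

lemma dA_eq: "h * (- \<gamma> * (2 * max a 0)) + h * (4*L * (2 * min a 0)) = h * dA a"
  by (auto simp: dA_def max_def min_def algebra_simps)

lemma fblk_deriv: "(fblk L \<gamma> \<tau> n k has_derivative (\<lambda>h. gblk k x \<bullet> h)) (at x within S)"
proof -
  define v where "v = - real k * nu L \<gamma> \<tau>"
  consider "k = n" | "k \<noteq> n" "odd k" | "k \<noteq> n" "even k" by blast
  then show ?thesis
  proof cases
    case 1
    have e: "fblk L \<gamma> \<tau> n k = (\<lambda>x. v + L * (fst x - cs1 \<tau> k)^2 + L * (snd x - cs2 \<tau> k)^2)"
      using 1 by (auto simp: fblk_def v_def fun_eq_iff Let_def)
    show ?thesis unfolding e
      by (rule has_derivative_eq_rhs, (rule derivative_eq_intros refl)+)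
         (use 1 in \<open>auto simp: gblk_def inner_prod_def fun_eq_iff algebra_simps\<close>)
  next
    case 2
    have e: "fblk L \<gamma> \<tau> n k = (\<lambda>x. v + (- \<gamma> * mp (fst x - cs1 \<tau> k) + 4*L * mn (fst x - cs1 \<tau> k)) + L * (snd x - cs2 \<tau> k)^2)"
      using 2 unfolding mpmn_sq by (auto simp: fblk_def v_def fun_eq_iff Let_def)
    show ?thesis unfolding e
      apply (rule has_derivative_eq_rhs, (rule derivative_eq_intros refl)+)
      using 2 by (auto simp: gblk_def inner_prod_def fun_eq_iff pa_def pb_def dA_eq[symmetric] algebra_simps)
  next
    case 3
    have e: "fblk L \<gamma> \<tau> n k = (\<lambda>x. v + L * (fst x - cs1 \<tau> k)^2 + (- \<gamma> * mp (snd x - cs2 \<tau> k) + 4*L * mn (snd x - cs2 \<tau> k)))"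
      using 3 unfolding mpmn_sq by (auto simp: fblk_def v_def fun_eq_iff Let_def)
    show ?thesis unfolding e
      apply (rule has_derivative_eq_rhs, (rule derivative_eq_intros refl)+)
      using 3 by (auto simp: gblk_def inner_prod_def fun_eq_iff pa_def pb_def dA_eq[symmetric] algebra_simps)
  qed
qed

lemma hfun_chain'[derivative_intros]:
  "(g has_derivative g') (at x within s) \<Longrightarrow>
   ((\<lambda>x. hfun \<tau> c1 c2 (g x)) has_derivative (\<lambda>h. g' h * hdv \<tau> c1 c2 (g x))) (at x within s)"
  using hfun_chain[of \<tau>] tpos by simp

lemma hw_mix: "hfun \<tau> L (if w > 0 then - \<gamma> else L2c L) u * w^2 = hfun \<tau> L (-\<gamma>) u * mp w + hfun \<tau> L (4*L) u * mn w"
  by (auto simp: mp_def mn_def L2c_def max_def min_def)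

lemma hd_mix: "hdv \<tau> L (-\<gamma>) u * mp w + hdv \<tau> L (4*L) u * mn w = hdv \<tau> L (cc w) u * w^2"
  by (auto simp: mp_def mn_def cc_def max_def min_def)

lemma hf_mix: "hfun \<tau> L (-\<gamma>) u * (2 * max w 0) + hfun \<tau> L (4*L) u * (2 * min w 0) = 2 * hfun \<tau> L (cc w) u * w"
  by (auto simp: cc_def max_def min_def)

lemma fbuf_deriv: "(fbuf L \<gamma> \<tau> j has_derivative (\<lambda>h. gbuf j x \<bullet> h)) (at x within S)"
proof -
  define v where "v = - real j * nu L \<gamma> \<tau>"
  show ?thesis
  proof (cases "odd j")
    case True
    define A where "A = (real j - 1) * \<tau>"
    define B where "B = cs2 \<tau> j"
    have e: "fbuf L \<gamma> \<tau> j = (\<lambda>x. v + g1 L \<gamma> \<tau> (fst x - A) + hfun \<tau> L (-\<gamma>) (fst x - A) * mp (snd x - B)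
          + hfun \<tau> L (4*L) (fst x - A) * mn (snd x - B))"
      using True unfolding fun_eq_iff fbuf_def Let_def v_def A_def B_def hw_mix by auto
    have u: "bu j x = fst x - A" "bw j x = snd x - B" using True by (auto simp: bu_def bw_def A_def B_def)
    show ?thesis unfolding e
      apply (rule has_derivative_eq_rhs, (rule derivative_eq_intros refl)+)
      apply (rule ext)
      apply (simp add: gbuf_def True inner_prod_def gU_def gW_def u)
      using hd_mix[of "fst x - A" "snd x - B"] hf_mix[of "fst x - A" "snd x - B"]
      by algebra
  next
    case False
    define A where "A = (real j - 2) * \<tau>"
    define B where "B = cs1 \<tau> j"
    have e: "fbuf L \<gamma> \<tau> j = (\<lambda>x. v + g1 L \<gamma> \<tau> (snd x - A) + hfun \<tau> L (-\<gamma>) (snd x - A) * mp (fst x - B)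
          + hfun \<tau> L (4*L) (snd x - A) * mn (fst x - B))"
      using False unfolding fun_eq_iff fbuf_def Let_def v_def A_def B_def hw_mix by auto
    have u: "bu j x = snd x - A" "bw j x = fst x - B" using False by (auto simp: bu_def bw_def A_def B_def)
    show ?thesis unfolding e
      apply (rule has_derivative_eq_rhs, (rule derivative_eq_intros refl)+)
      apply (rule ext)
      apply (simp add: gbuf_def False inner_prod_def gU_def gW_def u)
      using hd_mix[of "snd x - A" "fst x - B"] hf_mix[of "snd x - A" "fst x - B"]
      by algebra
  qed
qed

lemma grad_unique_box:
  fixes f :: "real \<times> real \<Rightarrow> real"
  assumes ab: "a1 < b1" "a2 < b2" and x: "x \<in> {a1..b1} \<times> {a2..b2}"
    and d1: "(f has_derivative (\<lambda>h. q1 \<bullet> h)) (at x within {a1..b1} \<times> {a2..b2})"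
    and d2: "(f has_derivative (\<lambda>h. q2 \<bullet> h)) (at x within {a1..b1} \<times> {a2..b2})"
  shows "q1 = q2"
proof -
  have c: "{a1..b1} \<times> {a2..b2} = cbox (a1, a2) (b1, b2)" by (simp add: cbox_Pair_eq)
  have "(\<lambda>h. q1 \<bullet> h) = (\<lambda>h. q2 \<bullet> h)"
    apply (rule frechet_derivative_unique_within_closed_interval[of "(a1,a2)" "(b1,b2)" x f])
    using ab x d1 d2 unfolding c by (auto simp: Basis_prod_def inner_prod_def)
  then have "q1 \<bullet> (q1 - q2) = q2 \<bullet> (q1 - q2)" by meson
  then have "(q1 - q2) \<bullet> (q1 - q2) = 0" by (simp add: inner_diff_left)
  then show ?thesis by simp
qed

lemma blk_box: "\<exists>a1 b1 a2 b2. a1 < b1 \<and> a2 < b2 \<and> blk \<tau> k = {a1..b1} \<times> {a2..b2}"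
proof (cases "odd k")
  case True
  then show ?thesis using tpos
    by (intro exI[of _ "(real k - 1) * \<tau>"] exI[of _ "real k * \<tau>"]) (simp add: blk_def algebra_simps)
next
  case False
  then show ?thesis using tpos
    by (intro exI[of _ "real k * \<tau>"] exI[of _ "(real k + 1) * \<tau>"] exI[of _ "(real k - 2) * \<tau>"] exI[of _ "(real k - 1) * \<tau>"]) (simp add: blk_def algebra_simps)
qed

lemma buf_box: "\<exists>a1 b1 a2 b2. a1 < b1 \<and> a2 < b2 \<and> buf \<tau> k = {a1..b1} \<times> {a2..b2}"
  using tpos
  by (intro exI[of _ "real k * \<tau>"] exI[of _ "(real k + 1) * \<tau>"] exI[of _ "(real k - 1) * \<tau>"] exI[of _ "real k * \<tau>"]) (simp add: buf_def algebra_simps)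

lemma G_blk:
  assumes "x \<in> blk \<tau> k" "(fblk L \<gamma> \<tau> n k has_derivative (\<lambda>h. G \<bullet> h)) (at x within blk \<tau> k)"
  shows "G = gblk k x"
  using blk_box[of k] assms fblk_deriv[of k x "blk \<tau> k"] grad_unique_box by metis

lemma G_buf:
  assumes "x \<in> buf \<tau> k" "(fbuf L \<gamma> \<tau> k has_derivative (\<lambda>h. G \<bullet> h)) (at x within buf \<tau> k)"
  shows "G = gbuf k x"
  using buf_box[of k] assms fbuf_deriv[of k x "buf \<tau> k"] grad_unique_box by metis

lemma blk_mem: "x \<in> blk \<tau> k \<longleftrightarrow> (if odd k then real k - 1 \<le> fst x/\<tau> \<and> fst x/\<tau> \<le> real k \<and> real k - 1 \<le> snd x/\<tau> \<and> snd x/\<tau> \<le> real k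
   else real k \<le> fst x/\<tau> \<and> fst x/\<tau> \<le> real k + 1 \<and> real k - 2 \<le> snd x/\<tau> \<and> snd x/\<tau> \<le> real k - 1)"
  using tpos by (cases x) (auto simp: blk_def le_divide_eq divide_le_eq)

lemma buf_mem: "x \<in> buf \<tau> j \<longleftrightarrow> real j \<le> fst x/\<tau> \<and> fst x/\<tau> \<le> real j + 1 \<and> real j - 1 \<le> snd x/\<tau> \<and> snd x/\<tau> \<le> real j"
  using tpos by (cases x) (auto simp: buf_def le_divide_eq divide_le_eq)

lemma blk_iff: "x \<in> blk \<tau> k \<longleftrightarrow> \<bar>pa k x\<bar> \<le> \<tau>/2 \<and> \<bar>pb k x\<bar> \<le> \<tau>/2"
  unfolding abs_le_iff by (cases x) (auto simp: blk_def pa_def pb_def cs1_def cs2_def algebra_simps)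

lemma buf_iff: "x \<in> buf \<tau> j \<longleftrightarrow> \<tau> \<le> bu j x \<and> bu j x \<le> 2*\<tau> \<and> \<bar>bw j x\<bar> \<le> \<tau>/2"
  unfolding abs_le_iff by (cases x) (auto simp: buf_def bu_def bw_def cs1_def cs2_def algebra_simps)

lemma bu_pa: "bu j x = pa j x + \<tau>/2" by (auto simp: bu_def pa_def cs1_def cs2_def algebra_simps)
lemma bw_pb: "bw j x = pb j x" by (auto simp: bw_def pb_def)
lemma pa_Suc: "pa (Suc j) x = bw j x" by (auto simp: bw_def pa_def cs1_def cs2_def algebra_simps)
lemma pb_Suc: "pb (Suc j) x = bu j x - 5*\<tau>/2" by (auto simp: bu_def pb_def cs1_def cs2_def algebra_simps)

lemma geo_blk_blk: assumes "x \<in> blk \<tau> i" "x \<in> blk \<tau> k" shows "i = k"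
proof -
  define X where "X = fst x / \<tau>"
  define Y where "Y = snd x / \<tau>"
  note A = assms[unfolded blk_mem, folded X_def Y_def]
  show ?thesis
  proof (cases "odd i"; cases "odd k")
    assume a: "odd i" "odd k"
    have "real i - 1 \<le> X" "X \<le> real i" "real k - 1 \<le> X" "X \<le> real k" using A a by simp_all
    then have "i \<le> k + 1" "k \<le> i + 1" by linarith+
    with a show ?thesis by presburger
  next
    assume a: "odd i" "\<not> odd k"
    have "real i - 1 \<le> X" "X \<le> real i" "real k \<le> X" "X \<le> real k + 1" 
      "real i - 1 \<le> Y" "Y \<le> real i" "real k - 2 \<le> Y" "Y \<le> real k - 1" using A a by simp_all
    then have "i \<le> k" "k \<le> i" by linarith+
    with a show ?thesis by presburger
  next
    assume a: "\<not> odd i" "odd k"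
    have "real k - 1 \<le> X" "X \<le> real k" "real i \<le> X" "X \<le> real i + 1" 
      "real k - 1 \<le> Y" "Y \<le> real k" "real i - 2 \<le> Y" "Y \<le> real i - 1" using A a by simp_all
    then have "i \<le> k" "k \<le> i" by linarith+
    with a show ?thesis by presburger
  next
    assume a: "\<not> odd i" "\<not> odd k"
    have "real i \<le> X" "X \<le> real i + 1" "real k \<le> X" "X \<le> real k + 1" using A a by simp_all
    then have "i \<le> k + 1" "k \<le> i + 1" by linarith+
    with a show ?thesis by presburger
  qed
qed

lemma fstX: "fst x = (fst x / \<tau>) * \<tau>" "snd x = (snd x / \<tau>) * \<tau>" using tpos by simp_all

lemma geo_blk_buf: assumes "x \<in> blk \<tau> i" "x \<in> buf \<tau> j"
  shows "(j = i \<and> pa i x = \<tau>/2) \<or> (Suc j = i \<and> pb i x = - \<tau>/2)"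
proof -
  define X where "X = fst x / \<tau>"
  define Y where "Y = snd x / \<tau>"
  have x1: "fst x = X * \<tau>" and x2: "snd x = Y * \<tau>" using fstX unfolding X_def Y_def by simp_all
  note A = assms(1)[unfolded blk_mem, folded X_def Y_def]
  note B = assms(2)[unfolded buf_mem, folded X_def Y_def]
  show ?thesis
  proof (cases "odd i")
    case a: True
    have h: "real i - 1 \<le> X" "X \<le> real i" "real i - 1 \<le> Y" "Y \<le> real i" 
      "real j \<le> X" "X \<le> real j + 1" "real j - 1 \<le> Y" "Y \<le> real j" using A B a by simp_all
    then have "j \<le> i" "i \<le> j + 1" by linarith+
    then consider "j = i" | "Suc j = i" by linarith
    then show ?thesis
    proof cases
      case 1
      then have "X = real i" using h by linarith
      then show ?thesis using 1 a by (simp add: pa_def x1 cs1_def algebra_simps)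
    next
      case 2
      then have "Y = real i - 1" using h by linarith
      then have "snd x = (real i - 1) * \<tau>" using x2 by simp
      then show ?thesis using 2 a by (simp add: pb_def cs2_def algebra_simps)
    qed
  next
    case a: False
    have h: "real i \<le> X" "X \<le> real i + 1" "real i - 2 \<le> Y" "Y \<le> real i - 1" 
      "real j \<le> X" "X \<le> real j + 1" "real j - 1 \<le> Y" "Y \<le> real j" using A B a by simp_all
    then have "j \<le> i" "i \<le> j + 1" by linarith+
    then consider "j = i" | "Suc j = i" by linarith
    then show ?thesis
    proof cases
      case 1
      then have "Y = real i - 1" using h by linarith
      then have "snd x = (real i - 1) * \<tau>" using x2 by simp
      then show ?thesis using 1 a by (simp add: pa_def cs2_def algebra_simps)
    next
      case 2
      then have "X = real i" using h by linarith
      then show ?thesis using 2 a by (simp add: pb_def x1 cs1_def algebra_simps)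
    qed
  qed
qed

lemma geo_buf_buf: assumes "x \<in> buf \<tau> i" "x \<in> buf \<tau> j" "\<bar>bw i x\<bar> < \<tau>/2"
  shows "i = j"
proof (rule ccontr)
  assume ne: "i \<noteq> j"
  define X where "X = fst x / \<tau>"
  define Y where "Y = snd x / \<tau>"
  have x1: "fst x = X * \<tau>" and x2: "snd x = Y * \<tau>" using fstX unfolding X_def Y_def by simp_all
  note A = assms(1)[unfolded buf_mem, folded X_def Y_def]
  note B = assms(2)[unfolded buf_mem, folded X_def Y_def]
  have h: "real i \<le> X" "X \<le> real i + 1" "real i - 1 \<le> Y" "Y \<le> real i"
      "real j \<le> X" "X \<le> real j + 1" "real j - 1 \<le> Y" "Y \<le> real j" using A B by simp_all
  then have "j \<le> i + 1" "i \<le> j + 1" by linarith+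
  with ne consider "j = i + 1" | "i = j + 1" by linarith
  then show False
  proof cases
    case 1
    then have "X = real i + 1" "Y = real i" using h by simp_all
    then have "fst x = (real i + 1) * \<tau>" "snd x = real i * \<tau>" using x1 x2 by simp_all
    then have "\<bar>bw i x\<bar> = \<tau>/2" using tpos by (auto simp: bw_def cs1_def cs2_def algebra_simps)
    then show False using assms(3) by simp
  next
    case 2
    then have "X = real i" "Y = real i - 1" using h by simp_all
    then have "fst x = real i * \<tau>" "snd x = (real i - 1) * \<tau>" using x1 x2 by simp_all
    then have "\<bar>bw i x\<bar> = \<tau>/2" using tpos by (auto simp: bw_def cs1_def cs2_def algebra_simps)
    then show False using assms(3) by simp
  qed
qed

definition r where "r = \<gamma>/(2*L)"
definition ll where "ll = ln (1 + r)"
definition bt where "bt = ln 2 / ll"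
definition c0 where "c0 = exp (-2::real)"
definition W0 where "W0 = \<tau>/2 * exp (-2*bt)"
definition KK where "KK = \<tau>/2 * (c0*\<tau>/2) powr bt"
definition sg where "sg = \<tau>*(1+2*r)/8"
definition Wf where "Wf u = (if u \<le> 5*\<tau>/4 then W0 else 2/3*W0*(1+r) powr (max 0 ((u - 3*\<tau>/2)/sg)))"
definition Wmax where "Wmax = 2/3*W0*(1+r) powr (1 + 4/(1+2*r))"

lemma r_pos: "0 < r" using gpos Lpos by (simp add: r_def)
lemma r_le: "r \<le> 1/2" using gL Lpos by (simp add: r_def field_simps)
lemma ll_pos: "0 < ll" using r_pos by (simp add: ll_def)
lemma ll_le_r: "ll \<le> r" using r_pos ln_add_one_self_le_self[of r] by (simp add: ll_def)
lemma ll_le_ln2: "ll \<le> ln 2" using r_pos r_le by (simp add: ll_def)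
lemma bt_ge1: "1 \<le> bt" using ll_pos ll_le_ln2 by (simp add: bt_def)
lemma bt_pos: "0 < bt" using bt_ge1 by simp
lemma bt_ge: "2/3/r \<le> bt"
proof -
  have "2/3/r \<le> 2/3/ll" using ll_pos ll_le_r by (intro divide_left_mono) auto
  also have "\<dots> \<le> bt" unfolding bt_def using ln2_ge ll_pos by (intro divide_right_mono) auto
  finally show ?thesis .
qed
lemma powr_bt: "(1+r) powr bt = 2"
  using r_pos ll_pos by (simp add: powr_def bt_def ll_def)
lemma c0_pos: "0 < c0" by (simp add: c0_def)
lemma c0_le1: "c0 \<le> 1" by (simp add: c0_def)
lemma exp_powr': "exp a powr b = exp (a*b)" for a b :: real by (simp add: powr_def)
lemma KK_eq: "KK = W0 * (\<tau>/2) powr bt"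
proof -
  have "(c0*\<tau>/2) powr bt = c0 powr bt * (\<tau>/2) powr bt"
    using c0_pos tpos by (simp add: powr_mult[symmetric])
  then show ?thesis unfolding KK_def W0_def c0_def exp_powr' by (simp add: mult_ac)
qed
lemma W0_pos: "0 < W0" using tpos by (simp add: W0_def)
lemma N1: "W0 \<le> c0*\<tau>/2"
  using bt_ge1 tpos by (simp add: W0_def c0_def)
lemma N3: "W0^2 \<le> 16/45 * r * \<tau>^2"
proof -
  have "4*bt \<le> exp (4*bt)" using exp_ge_add_one_self[of "4*bt"] by linarith
  moreover have "8/3/r \<le> 4*bt" using bt_ge by simp
  ultimately have "8/3/r \<le> exp (4*bt)" by linarith
  then have "1/exp (4*bt) \<le> 1/(8/3/r)" using r_pos by (intro divide_left_mono) auto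
  then have e: "exp (-4*bt) \<le> 3/8*r" by (simp add: exp_minus field_simps)
  have "W0^2 = \<tau>^2/4 * exp (-4*bt)" unfolding W0_def by (simp add: power_mult_distrib power2_eq_square exp_add[symmetric])
  also have "\<dots> \<le> \<tau>^2/4 * (3/8*r)" using e tpos by (intro mult_left_mono) auto
  also have "\<dots> \<le> 16/45 * r * \<tau>^2" using r_pos tpos by simp
  finally show ?thesis .
qed

lemma q_le: assumes "0 \<le> x" "x \<le> 1/2" shows "x - x^2/2 + x^3/3 \<le> (5/12::real)"
proof -
  have "5/12 - (x - x^2/2 + x^3/3) = (1/2 - x) * (5/6 - x/3 + x^2/3)"
    by (simp add: field_simps power2_eq_square power3_eq_cube; algebra)
  moreover have "0 \<le> 5/6 - x/3 + x^2/3" using assms zero_le_power2[of x] by linarith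
  moreover have "0 \<le> (1/2 - x) * (5/6 - x/3 + x^2/3)"
    using assms calculation(2) by (intro mult_nonneg_nonneg) auto
  ultimately show ?thesis by linarith
qed

lemma N2aux: "(1 + 4/(1+2*r)) * ll^2 + 8/5*ll \<le> 4/3"
proof (cases "r \<le> 1/4")
  case True
  have E: "1 + 4/(1+2*r) \<le> 5" using r_pos by (simp add: field_simps)
  have l: "ll \<le> 1/4" using ll_le_r True by simp
  have "ll^2 \<le> (1/4)^2" using l ll_pos by (intro power_mono) auto
  then have "ll^2 \<le> 1/16" by (simp add: power2_eq_square)
  then have "(1 + 4/(1+2*r)) * ll^2 \<le> 5 * (1/16)" using E r_pos by (intro mult_mono) auto
  then show ?thesis using l by simp
next
  case False
  have E: "1 + 4/(1+2*r) \<le> 11/3" using False by (simp add: field_simps)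
  have l: "ll \<le> 5/12" using ln_up3[of r] q_le[of r] r_pos r_le by (simp add: ll_def)
  have "ll^2 \<le> (5/12)^2" using l ll_pos by (intro power_mono) auto
  then have "ll^2 \<le> 25/144" by (simp add: power2_eq_square)
  then have "(1 + 4/(1+2*r)) * ll^2 \<le> 11/3 * (25/144)" using E r_pos by (intro mult_mono) auto
  then show ?thesis using l by simp
qed

lemma N2: "Wmax \<le> c0*\<tau>/2"
proof -
  define E where "E = 1 + 4/(1+2*r)"
  have m: "ll * (2/5) \<le> ll * ln (3/2)" by (rule mult_left_mono[OF ln32_ge]) (use ll_pos in simp)
  have a: "E*ll^2 + 2*ll - 2*ln 2 \<le> ll * ln (3/2)"
    using N2aux ln2_ge m unfolding E_def by linarith
  have b: "E*ll + 2 - 2*bt \<le> ln (3/2)"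
  proof -
    have "(E*ll + 2 - 2*bt) * ll = E*ll^2 + 2*ll - 2*ln 2"
      using ll_pos by (simp add: bt_def field_simps power2_eq_square)
    then have "(E*ll + 2 - 2*bt) * ll \<le> ln (3/2) * ll" using a by (simp add: mult.commute)
    then show ?thesis using ll_pos by simp
  qed
  have c: "exp (E*ll + 2 - 2*bt) \<le> 3/2"
  proof -
    have "exp (E*ll + 2 - 2*bt) \<le> exp (ln (3/2))" using b by (simp only: exp_le_cancel_iff)
    moreover have "exp (ln (3/2::real)) = 3/2" by simp
    ultimately show ?thesis by simp
  qed
  have p: "(1+r) powr E = exp (E*ll)" using r_pos by (simp add: powr_def ll_def mult.commute)
  have q: "exp (-2*bt) * exp (E*ll) = exp (E*ll + 2 - 2*bt) * exp (-2)"
  proof -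
    have "exp (-2*bt) * exp (E*ll) = exp (-2*bt + E*ll)" by (rule exp_add[symmetric])
    also have "\<dots> = exp ((E*ll + 2 - 2*bt) + -2)" by (simp add: algebra_simps)
    also have "\<dots> = exp (E*ll + 2 - 2*bt) * exp (-2)" by (rule exp_add)
    finally show ?thesis .
  qed
  have w: "Wmax = \<tau>/2 * (2/3 * (exp (-2*bt) * exp (E*ll)))"
    unfolding Wmax_def W0_def E_def[symmetric] p by (simp add: mult_ac)
  have "2/3 * (exp (-2*bt) * exp (E*ll)) \<le> 2/3 * (3/2 * exp (-2))"
    unfolding q using c by (intro mult_left_mono) auto
  then have "2/3 * (exp (-2*bt) * exp (E*ll)) \<le> exp (-2)" by simp
  then show ?thesis unfolding w c0_def using tpos by (simp add: mult.commute)
qed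

definition Dt :: "real \<Rightarrow> real" where "Dt t = 30*t^2*(1-t)^2"
definition tt :: "real \<Rightarrow> real" where "tt u = (u - \<tau>)/\<tau>"
definition base :: "real \<Rightarrow> real" where "base u = ((1-2*r)*(u-\<tau>) + 2*r*\<tau>)/4"

lemma hP: "hfun \<tau> L (-\<gamma>) u = L - (L+\<gamma>)*S5 (tt u)"
  using hfun_S5[of \<tau> L "-\<gamma>" u] tpos by (simp add: tt_def)
lemma hN: "hfun \<tau> L (4*L) u = L + 3*L*S5 (tt u)"
  using hfun_S5[of \<tau> L "4*L" u] tpos by (simp add: tt_def algebra_simps)
lemma hdP: "hdv \<tau> L (-\<gamma>) u = -(L+\<gamma>)*Dt (tt u)/\<tau>"
  by (simp add: hdv_def Dt_def tt_def)
lemma hdN: "hdv \<tau> L (4*L) u = 3*L*Dt (tt u)/\<tau>"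
  by (simp add: hdv_def Dt_def tt_def)

lemma g1d_base: "- (1/(4*L)) * g1d L \<gamma> \<tau> u = base u"
  using Lpos unfolding g1d_def base_def r_def by (simp add: field_simps)

lemma g1d_eq: "g1d L \<gamma> \<tau> u = - 4*L*base u"
  using g1d_base[of u] Lpos by (simp add: field_simps)

lemma step_pos: assumes "w > 0"
  shows "u - 1/(4*L) * (g1d L \<gamma> \<tau> u + hdv \<tau> L (cc w) u * w^2) = u + base u + (1+2*r)/4 * Dt (tt u) * w^2/\<tau>"
    and "w - 1/(4*L) * (2 * hfun \<tau> L (cc w) u * w) = w * (1/2 + (1+2*r) * S5 (tt u)/2)"
proof -
  have c: "cc w = -\<gamma>" using assms by (simp add: cc_def)
  show "u - 1/(4*L) * (g1d L \<gamma> \<tau> u + hdv \<tau> L (cc w) u * w^2) = u + base u + (1+2*r)/4 * Dt (tt u) * w^2/\<tau>"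
    using Lpos tpos unfolding c hdP g1d_eq r_def by (simp add: field_simps)
  show "w - 1/(4*L) * (2 * hfun \<tau> L (cc w) u * w) = w * (1/2 + (1+2*r) * S5 (tt u)/2)"
    using Lpos unfolding c hP r_def by (simp add: field_simps)
qed

lemma step_neg: assumes "w \<le> 0"
  shows "u - 1/(4*L) * (g1d L \<gamma> \<tau> u + hdv \<tau> L (cc w) u * w^2) = u + base u - 3/4 * Dt (tt u) * w^2/\<tau>"
    and "w - 1/(4*L) * (2 * hfun \<tau> L (cc w) u * w) = w * (1/2 - 3 * S5 (tt u)/2)"
proof -
  have c: "cc w = 4*L" using assms by (simp add: cc_def)
  show "u - 1/(4*L) * (g1d L \<gamma> \<tau> u + hdv \<tau> L (cc w) u * w^2) = u + base u - 3/4 * Dt (tt u) * w^2/\<tau>"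
    using Lpos tpos unfolding c hdN g1d_eq by (simp add: field_simps)
  show "w - 1/(4*L) * (2 * hfun \<tau> L (cc w) u * w) = w * (1/2 - 3 * S5 (tt u)/2)"
    using Lpos unfolding c hN by (simp add: field_simps)
qed

lemma sg_pos: "0 < sg" using tpos r_pos by (simp add: sg_def)
lemma half_sg: "(\<tau>/2)/sg = 4/(1+2*r)"
proof -
  have "\<tau>*(1+2*r) \<noteq> 0" "1+2*r \<noteq> 0" using tpos r_pos by auto
  then show ?thesis unfolding sg_def by (simp add: field_simps)
qed
lemma onepr: "1 \<le> 1 + r" using r_pos by simp

lemma Wf_ge: "2/3*W0 \<le> Wf u"
proof (cases "u \<le> 5*\<tau>/4")
  case True then show ?thesis using W0_pos by (simp add: Wf_def)
next
  case False
  have "1 \<le> (1+r) powr (max 0 ((u - 3*\<tau>/2)/sg))" using onepr by (intro ge_one_powr_ge_zero) auto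
  then have "2/3*W0*1 \<le> 2/3*W0*(1+r) powr (max 0 ((u - 3*\<tau>/2)/sg))" using W0_pos
    by (intro mult_left_mono) auto
  then show ?thesis using False by (simp add: Wf_def)
qed

lemma Wf_mono: assumes "5*\<tau>/4 < u" "u \<le> v" shows "Wf u \<le> Wf v"
proof -
  have "(u - 3*\<tau>/2)/sg \<le> (v - 3*\<tau>/2)/sg" using assms sg_pos by (intro divide_right_mono) auto
  then have "max 0 ((u - 3*\<tau>/2)/sg) \<le> max 0 ((v - 3*\<tau>/2)/sg)" by simp
  then have "(1+r) powr (max 0 ((u - 3*\<tau>/2)/sg)) \<le> (1+r) powr (max 0 ((v - 3*\<tau>/2)/sg))"
    using onepr by (intro powr_mono) auto
  then have "2/3*W0*(1+r) powr (max 0 ((u - 3*\<tau>/2)/sg)) \<le> 2/3*W0*(1+r) powr (max 0 ((v - 3*\<tau>/2)/sg))"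
    using W0_pos by (intro mult_left_mono) auto
  then show ?thesis using assms by (simp add: Wf_def)
qed

lemma Wf_le: assumes "\<tau> \<le> u" "u \<le> 2*\<tau>" shows "Wf u \<le> c0*\<tau>/2"
proof (cases "u \<le> 5*\<tau>/4")
  case True then show ?thesis using N1 by (simp add: Wf_def)
next
  case False
  have "(u - 3*\<tau>/2)/sg \<le> (\<tau>/2)/sg" using assms sg_pos by (intro divide_right_mono) auto
  then have h1: "(u - 3*\<tau>/2)/sg \<le> 1 + 4/(1+2*r)" using half_sg by simp
  have h2: "0 \<le> 1 + 4/(1+2*r)" using r_pos by simp
  have "max 0 ((u - 3*\<tau>/2)/sg) \<le> 1 + 4/(1+2*r)" by (intro max.boundedI h1 h2)
  then have "(1+r) powr (max 0 ((u - 3*\<tau>/2)/sg)) \<le> (1+r) powr (1 + 4/(1+2*r))"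
    using onepr by (intro powr_mono) auto
  then have "2/3*W0*(1+r) powr (max 0 ((u - 3*\<tau>/2)/sg)) \<le> Wmax"
    unfolding Wmax_def using W0_pos by (intro mult_left_mono) auto
  then show ?thesis using False N2 by (simp add: Wf_def)
qed

lemma base_bounds: assumes "\<tau> \<le> u" "u \<le> 2*\<tau>"
  shows "r*\<tau>/2 \<le> base u" "base u \<le> \<tau>/4" "3*\<tau>/2 \<le> u \<Longrightarrow> sg \<le> base u"
proof -
  have a: "0 \<le> 1 - 2*r" using r_le by simp
  have "0 \<le> (1-2*r)*(u-\<tau>)" using a assms by simp
  then show "r*\<tau>/2 \<le> base u" unfolding base_def by simp
  have "(1-2*r)*(u-\<tau>) \<le> (1-2*r)*\<tau>" using a assms by (intro mult_left_mono) auto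
  then show "base u \<le> \<tau>/4" unfolding base_def by (simp add: algebra_simps)
  assume "3*\<tau>/2 \<le> u"
  then have "(1-2*r)*(\<tau>/2) \<le> (1-2*r)*(u-\<tau>)" using a by (intro mult_left_mono) auto
  moreover have "base u - sg = ((1-2*r)*(u-\<tau>) - (1-2*r)*(\<tau>/2))/4"
    by (simp add: base_def sg_def field_simps)
  ultimately show "sg \<le> base u" by simp
qed

lemma Q_scalar:
  assumes u1: "\<tau> \<le> u" and u2: "u \<le> 2*\<tau>" and q1: "w \<le> 0 \<Longrightarrow> \<bar>w\<bar> \<le> W0" and q2: "\<bar>w\<bar> \<le> Wf u"
    and U: "u' = u - 1/(4*L) * (g1d L \<gamma> \<tau> u + hdv \<tau> L (cc w) u * w^2)"
    and V: "w' = w - 1/(4*L) * (2 * hfun \<tau> L (cc w) u * w)"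
  shows "u \<le> u'" and "u' \<le> 2*\<tau> \<Longrightarrow> (w' \<le> 0 \<longrightarrow> \<bar>w'\<bar> \<le> W0) \<and> \<bar>w'\<bar> \<le> Wf u'"
    and "2*\<tau> < u' \<Longrightarrow> u' \<le> 5*\<tau>/2 \<and> \<bar>w'\<bar> \<le> c0*\<tau>/2"
proof -
  define t where "t = tt u"
  have t0: "0 \<le> t" "t \<le> 1" using u1 u2 tpos by (simp_all add: t_def tt_def field_simps)
  have t14: "u \<le> 5*\<tau>/4 \<Longrightarrow> t \<le> 1/4" and t12: "u \<le> 3*\<tau>/2 \<Longrightarrow> t \<le> 1/2"
    using tpos by (simp_all add: t_def tt_def field_simps)
  have S: "0 \<le> S5 t" "S5 t \<le> 1" using S5_nonneg S5_le1 t0 by auto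
  have D: "0 \<le> Dt t" "Dt t \<le> 30/16" using S5_deriv_bound[of t] t0 by (auto simp: Dt_def)
  have wle: "\<bar>w\<bar> \<le> c0*\<tau>/2" using q2 Wf_le[OF u1 u2] by linarith
  have "c0*\<tau> \<le> \<tau>" using c0_le1 tpos c0_pos by (intro mult_left_le_one_le) auto
  then have wle2: "\<bar>w\<bar> \<le> \<tau>/2" using wle by simp
  have w2: "w^2 \<le> \<tau>^2/4"
  proof -
    have "\<bar>w\<bar>^2 \<le> (\<tau>/2)^2" using wle2 by (intro power_mono) auto
    then show ?thesis by (simp add: power_divide)
  qed
  have ext: "Dt t * w^2/\<tau> \<le> 30/64 * \<tau>"
  proof -
    have "Dt t * w^2 \<le> 30/16 * (\<tau>^2/4)" using D w2 by (intro mult_mono) auto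
    then show ?thesis using tpos by (simp add: field_simps power2_eq_square)
  qed
  have ext0: "0 \<le> Dt t * w^2/\<tau>" using D tpos by simp
  note bb = base_bounds[OF u1 u2]
  define F where "F = (if w > 0 then 1/2 + (1+2*r) * S5 t/2 else 1/2 - 3 * S5 t/2)"
  have wF: "w' = w * F"
  proof (cases "w > 0")
    case True then show ?thesis unfolding V F_def t_def using step_pos(2)[OF True] by simp
  next
    case False then show ?thesis unfolding V F_def t_def using step_neg(2)[of w u] by simp
  qed
  have Fpos: "0 < F \<and> F \<le> 1 + r \<and> (t \<le> 1/2 \<longrightarrow> F \<le> 1) \<and> (t \<le> 1/4 \<longrightarrow> F \<le> 2/3)" if wp: "w > 0"
  proof (intro conjI impI)
    have Fe: "F = 1/2 + (1+2*r) * S5 t/2" using wp by (simp add: F_def)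
    show "0 < F" unfolding Fe using S r_pos by (simp add: add_pos_nonneg)
    have "(1+2*r) * S5 t \<le> (1+2*r) * 1" using S r_pos by (intro mult_left_mono) auto
    then show "F \<le> 1 + r" unfolding Fe by simp
    assume "t \<le> 1/2"
    then have "S5 t \<le> 1/2" by (rule S5_half)
    then have "(1+2*r) * S5 t \<le> 2 * (1/2)" using S r_pos r_le by (intro mult_mono) auto
    then show "F \<le> 1" unfolding Fe by simp
  next
    have Fe: "F = 1/2 + (1+2*r) * S5 t/2" using wp by (simp add: F_def)
    assume "t \<le> 1/4"
    then have "S5 t \<le> 10/64" using S5_quarter t0 by simp
    then have "(1+2*r) * S5 t \<le> 2 * (10/64)" using S r_pos r_le by (intro mult_mono) auto
    then show "F \<le> 2/3" unfolding Fe by simp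
  qed
  have Fneg: "-1 \<le> F \<and> F \<le> 1/2 \<and> (t \<le> 1/4 \<longrightarrow> 0 \<le> F)" if wn: "w \<le> 0"
  proof -
    have Fe: "F = 1/2 - 3 * S5 t/2" using wn by (simp add: F_def)
    have "t \<le> 1/4 \<longrightarrow> S5 t \<le> 10/64" using S5_quarter t0 by simp
    then show ?thesis unfolding Fe using S by linarith
  qed
  have prog: "u \<le> u' \<and> u' \<le> u + \<tau>/2 \<and> (w > 0 \<longrightarrow> u + base u \<le> u')"
  proof (cases "w > 0")
    case True
    define X where "X = (1+2*r)/4 * (Dt t * w^2/\<tau>)"
    have e: "u' = u + base u + X" unfolding U t_def X_def using step_pos(1)[OF True] by simp
    have "0 \<le> X" unfolding X_def using ext0 r_pos by (intro mult_nonneg_nonneg) auto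
    moreover have "X \<le> 2/4 * (30/64*\<tau>)" unfolding X_def using ext ext0 r_le r_pos by (intro mult_mono) auto
    moreover have "0 \<le> r*\<tau>" using r_pos tpos by simp
    ultimately show ?thesis using e bb(1,2) True by (intro conjI impI; linarith)
  next
    case False
    have e: "u' = u + base u - 3/4 * (Dt t * w^2/\<tau>)" unfolding U t_def using step_neg(1) False by simp
    have wW: "w^2 \<le> W0^2"
    proof -
      have "\<bar>w\<bar>^2 \<le> W0^2" using q1 False by (intro power_mono) auto
      then show ?thesis by simp
    qed
    have "Dt t * w^2 \<le> 30/16 * (16/45 * r * \<tau>^2)" using D wW N3 by (intro mult_mono) auto
    then have "Dt t * w^2/\<tau> \<le> 2/3 * r * \<tau>" using tpos by (simp add: field_simps power2_eq_square)
    moreover have "0 \<le> r*\<tau>" using r_pos tpos by simp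
    ultimately show ?thesis using e bb(1,2) ext0 False by (intro conjI impI; linarith)
  qed
  show "u \<le> u'" using prog by simp
  have absF: "\<bar>w'\<bar> = \<bar>w\<bar> * \<bar>F\<bar>" using wF by (simp add: abs_mult)
  have F1: "t \<le> 1/2 \<Longrightarrow> \<bar>F\<bar> \<le> 1" using Fpos Fneg by (cases "w > 0") auto
  have Fneg1: "w \<le> 0 \<Longrightarrow> \<bar>F\<bar> \<le> 1" using Fneg by auto
  have qq1: "w' \<le> 0 \<longrightarrow> \<bar>w'\<bar> \<le> W0"
  proof
    assume "w' \<le> 0"
    then have wn: "w \<le> 0" using wF Fpos by (metis mult_pos_pos not_le)
    have "\<bar>w'\<bar> \<le> \<bar>w\<bar> * 1" unfolding absF using Fneg1[OF wn] by (intro mult_left_mono) auto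
    then show "\<bar>w'\<bar> \<le> W0" using q1[OF wn] by simp
  qed
  show "u' \<le> 2*\<tau> \<Longrightarrow> (w' \<le> 0 \<longrightarrow> \<bar>w'\<bar> \<le> W0) \<and> \<bar>w'\<bar> \<le> Wf u'"
  proof -
    assume u'2: "u' \<le> 2*\<tau>"
    have "\<bar>w'\<bar> \<le> Wf u'"
    proof (cases "u \<le> 5*\<tau>/4")
      case True
      have F23: "\<bar>F\<bar> \<le> 2/3" using Fpos Fneg t14[OF True] by (cases "w > 0") auto
      have "\<bar>w'\<bar> \<le> \<bar>w\<bar> * (2/3)" unfolding absF using F23 by (intro mult_left_mono) auto
      also have "\<dots> \<le> W0 * (2/3)" using q2 True by (simp add: Wf_def)
      also have "\<dots> \<le> Wf u'" using Wf_ge[of u'] by simp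
      finally show ?thesis .
    next
      case c1: False
      show ?thesis
      proof (cases "u \<le> 3*\<tau>/2 \<or> w \<le> 0")
        case True
        then have "\<bar>F\<bar> \<le> 1" using F1 t12 Fneg1 by auto
        then have "\<bar>w'\<bar> \<le> \<bar>w\<bar> * 1" unfolding absF by (intro mult_left_mono) auto
        also have "\<dots> \<le> Wf u" using q2 by simp
        also have "\<dots> \<le> Wf u'" using Wf_mono c1 prog by auto
        finally show ?thesis .
      next
        case False
        then have wp: "w > 0" and u32: "3*\<tau>/2 < u" by auto
        define e where "e = (u - 3*\<tau>/2)/sg"
        have e0: "0 \<le> e" using u32 sg_pos by (simp add: e_def)
        have Wfu: "Wf u = 2/3*W0*(1+r) powr e" using c1 e0 by (simp add: Wf_def e_def)
        have "u + sg \<le> u'" using prog wp bb(3) u32 by auto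
        then have "(u + sg - 3*\<tau>/2)/sg \<le> (u' - 3*\<tau>/2)/sg" using sg_pos by (intro divide_right_mono) auto
        moreover have "(u + sg - 3*\<tau>/2)/sg = e + 1" using sg_pos by (simp add: e_def field_simps)
        ultimately have ee: "e + 1 \<le> (u' - 3*\<tau>/2)/sg" by simp
        have Wfu': "Wf u' = 2/3*W0*(1+r) powr ((u' - 3*\<tau>/2)/sg)"
          using prog u32 e0 ee by (simp add: Wf_def)
        have "\<bar>w'\<bar> \<le> \<bar>w\<bar> * (1+r)" unfolding absF using Fpos[OF wp] by (intro mult_left_mono) auto
        also have "\<dots> \<le> Wf u * (1+r)" using q2 r_pos by (intro mult_right_mono) auto
        also have "\<dots> = 2/3*W0*(1+r) powr (e + 1)" unfolding Wfu using r_pos by (simp add: powr_add)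
        also have "\<dots> \<le> Wf u'" unfolding Wfu' using ee onepr W0_pos by (intro mult_left_mono powr_mono) auto
        finally show ?thesis .
      qed
    qed
    then show ?thesis using qq1 by simp
  qed
  show "2*\<tau> < u' \<Longrightarrow> u' \<le> 5*\<tau>/2 \<and> \<bar>w'\<bar> \<le> c0*\<tau>/2"
  proof -
    assume u'2: "2*\<tau> < u'"
    have "u' \<le> 5*\<tau>/2" using prog u2 by simp
    moreover have "\<bar>w'\<bar> \<le> c0*\<tau>/2"
    proof (cases "w > 0")
      case False
      have "\<bar>w'\<bar> \<le> \<bar>w\<bar> * 1" unfolding absF using Fneg1 False by (intro mult_left_mono) auto
      then show ?thesis using wle by simp
    next
      case wp: True
      have u32: "3*\<tau>/2 < u"
      proof (rule ccontr)
        assume "\<not> 3*\<tau>/2 < u"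
        then show False using prog u'2 by simp
      qed
      then have c1: "\<not> u \<le> 5*\<tau>/4" using tpos by simp
      define e where "e = (u - 3*\<tau>/2)/sg"
      have e0: "0 \<le> e" using u32 sg_pos by (simp add: e_def)
      have Wfu: "Wf u = 2/3*W0*(1+r) powr e" using c1 e0 by (simp add: Wf_def e_def)
      have "e \<le> (\<tau>/2)/sg" unfolding e_def using u2 sg_pos by (intro divide_right_mono) auto
      then have ee: "e + 1 \<le> 1 + 4/(1+2*r)" using half_sg by simp
      have "\<bar>w'\<bar> \<le> \<bar>w\<bar> * (1+r)" unfolding absF using Fpos[OF wp] by (intro mult_left_mono) auto
      also have "\<dots> \<le> Wf u * (1+r)" using q2 r_pos by (intro mult_right_mono) auto
      also have "\<dots> = 2/3*W0*(1+r) powr (e + 1)" unfolding Wfu using r_pos by (simp add: powr_add)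
      also have "\<dots> \<le> Wmax" unfolding Wmax_def using ee onepr W0_pos by (intro mult_left_mono powr_mono) auto
      also have "\<dots> \<le> c0*\<tau>/2" by (rule N2)
      finally show ?thesis .
    qed
    ultimately show ?thesis by simp
  qed
qed

lemma R_scalar:
  assumes a1: "\<bar>a\<bar> \<le> \<tau>/2" and b1: "\<bar>b\<bar> \<le> \<tau>/2" and K: "\<bar>b\<bar> * \<bar>a\<bar> powr bt \<le> KK"
    and A: "a' = a - 1/(4*L) * dA a" and B: "b' = b - 1/(4*L) * (2*L*b)"
  shows "b' = b/2" and "a' \<le> \<tau>/2 \<Longrightarrow> \<bar>a'\<bar> \<le> \<tau>/2 \<and> \<bar>b'\<bar> * \<bar>a'\<bar> powr bt \<le> KK"
    and "\<tau>/2 < a' \<Longrightarrow> a' \<le> 3*\<tau>/4 \<and> \<bar>b'\<bar> \<le> W0"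
proof -
  show bb: "b' = b/2" unfolding B using Lpos by (simp add: field_simps)
  have main: "(a' \<le> \<tau>/2 \<longrightarrow> \<bar>a'\<bar> \<le> \<tau>/2 \<and> \<bar>b'\<bar> * \<bar>a'\<bar> powr bt \<le> KK) \<and> (\<tau>/2 < a' \<longrightarrow> a' \<le> 3*\<tau>/4 \<and> \<bar>b'\<bar> \<le> W0)"
  proof (cases "a > 0")
    case True
    have ae: "a' = (1+r)*a" unfolding A dA_def using True Lpos by (simp add: r_def field_simps)
    have pw: "\<bar>a'\<bar> powr bt = 2 * \<bar>a\<bar> powr bt"
      unfolding ae using True r_pos by (simp add: abs_mult powr_mult powr_bt)
    have Phi: "\<bar>b'\<bar> * \<bar>a'\<bar> powr bt = \<bar>b\<bar> * \<bar>a\<bar> powr bt" unfolding pw bb by simp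
    show ?thesis
    proof (intro conjI impI)
      assume "a' \<le> \<tau>/2"
      then show "\<bar>a'\<bar> \<le> \<tau>/2" unfolding ae using True r_pos by simp
      show "\<bar>b'\<bar> * \<bar>a'\<bar> powr bt \<le> KK" using Phi K by simp
    next
      assume h: "\<tau>/2 < a'"
      have "(1+r)*a \<le> (3/2)*(\<tau>/2)" using r_le a1 True r_pos by (intro mult_mono) auto
      then show "a' \<le> 3*\<tau>/4" unfolding ae by simp
      have tp: "0 < (\<tau>/2) powr bt" using tpos by simp
      have "(\<tau>/2) powr bt \<le> \<bar>a'\<bar> powr bt" using h tpos bt_pos by (intro powr_mono2) auto
      then have "\<bar>b'\<bar> * (\<tau>/2) powr bt \<le> \<bar>b'\<bar> * \<bar>a'\<bar> powr bt" by (intro mult_left_mono) auto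
      also have "\<dots> \<le> W0 * (\<tau>/2) powr bt" using Phi K KK_eq by simp
      finally show "\<bar>b'\<bar> \<le> W0" using tp by simp
    qed
  next
    case False
    have ae: "a' = - a" unfolding A dA_def using False Lpos by (simp add: field_simps)
    have Phi: "\<bar>b'\<bar> * \<bar>a'\<bar> powr bt \<le> \<bar>b\<bar> * \<bar>a\<bar> powr bt" unfolding ae bb
      by (simp add: mult_right_mono)
    show ?thesis using Phi K a1 ae False by auto
  qed
  then show "a' \<le> \<tau>/2 \<Longrightarrow> \<bar>a'\<bar> \<le> \<tau>/2 \<and> \<bar>b'\<bar> * \<bar>a'\<bar> powr bt \<le> KK"
    and "\<tau>/2 < a' \<Longrightarrow> a' \<le> 3*\<tau>/4 \<and> \<bar>b'\<bar> \<le> W0" by auto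
qed

abbreviation "eta \<equiv> 1/(4*L)"

lemma blk_step_coords: assumes "k \<noteq> n"
  shows "pa k (x - eta *\<^sub>R gblk k x) = pa k x - eta * dA (pa k x)"
    and "pb k (x - eta *\<^sub>R gblk k x) = pb k x - eta * (2*L*pb k x)"
  using assms by (auto simp: gblk_def pa_def pb_def)

lemma fin_step_coords:
  shows "pa n (x - eta *\<^sub>R gblk n x) = pa n x / 2"
    and "pb n (x - eta *\<^sub>R gblk n x) = pb n x / 2"
  using Lpos by (auto simp: gblk_def pa_def pb_def field_simps)

lemma buf_step_coords:
  shows "bu j (x - eta *\<^sub>R gbuf j x) = bu j x - eta * gU j x"
    and "bw j (x - eta *\<^sub>R gbuf j x) = bw j x - eta * gW j x"
  by (auto simp: gbuf_def bu_def bw_def)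

lemma tt_tau: "tt \<tau> = 0" and tt_2tau: "tt (2*\<tau>) = 1" using tpos by (auto simp: tt_def)

lemma E1: assumes "bu j x = \<tau>" "j \<noteq> n" shows "gbuf j x = gblk j x"
proof -
  have h: "hfun \<tau> L c \<tau> = L" for c using hfun_S5[of \<tau> L c \<tau>] tpos by (simp add: S5_def)
  have hd0: "hdv \<tau> L c \<tau> = 0" for c by (simp add: hdv_def)
  have pa: "pa j x = \<tau>/2" using assms bu_pa[of j x] by simp
  have gU: "gU j x = -\<gamma>*\<tau>" unfolding gU_def assms(1) hd0 by (simp add: g1d_def algebra_simps)
  have gW: "gW j x = 2*L*pb j x" unfolding gW_def assms(1) h bw_pb by simp
  have dA: "dA (pa j x) = -\<gamma>*\<tau>" unfolding pa dA_def using tpos by simp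
  show ?thesis using assms(2) unfolding gbuf_def gblk_def gU gW dA by simp
qed

lemma E2: assumes "bu j x = 2*\<tau>" "Suc j \<noteq> n" shows "gbuf j x = gblk (Suc j) x"
proof -
  have h: "hfun \<tau> L c (2*\<tau>) = c" for c using hfun_S5[of \<tau> L c "2*\<tau>"] tpos by (simp add: S5_def)
  have hd0: "hdv \<tau> L c (2*\<tau>) = 0" for c using tpos by (simp add: hdv_def)
  have pa: "pa (Suc j) x = bw j x" by (rule pa_Suc)
  have pb: "pb (Suc j) x = -\<tau>/2" using assms pb_Suc[of j x] by simp
  have gU: "gU j x = -L*\<tau>" unfolding gU_def assms(1) hd0 by (simp add: g1d_def algebra_simps)
  have gW: "gW j x = dA (bw j x)" unfolding gW_def assms(1) h by (simp add: cc_def dA_def)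
  show ?thesis using assms(2) unfolding gbuf_def gblk_def gU gW pa pb by auto
qed

lemma edge_scalar: assumes "u = 2*\<tau>"
  shows "u - eta * (g1d L \<gamma> \<tau> u + hdv \<tau> L (cc w) u * w^2) = 9*\<tau>/4"
    and "\<bar>w - eta * (2 * hfun \<tau> L (cc w) u * w)\<bar> \<le> 3/2 * \<bar>w\<bar>"
proof -
  have h: "hfun \<tau> L c (2*\<tau>) = c" for c using hfun_S5[of \<tau> L c "2*\<tau>"] tpos by (simp add: S5_def)
  have hd0: "hdv \<tau> L c (2*\<tau>) = 0" for c using tpos by (simp add: hdv_def)
  show "u - eta * (g1d L \<gamma> \<tau> u + hdv \<tau> L (cc w) u * w^2) = 9*\<tau>/4"
    unfolding assms hd0 g1d_def using Lpos by (simp add: field_simps)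
  have e: "w - eta * (2 * hfun \<tau> L (cc w) u * w) = w * (1 - cc w/(2*L))"
    unfolding assms h using Lpos by (simp add: field_simps)
  have "\<bar>1 - cc w/(2*L)\<bar> \<le> 3/2"
  proof (cases "w > 0")
    case True
    have "\<gamma>/(2*L) \<le> 1/2" using r_le by (simp add: r_def)
    then show ?thesis using True gpos Lpos by (simp add: cc_def)
  next
    case False then show ?thesis using Lpos by (simp add: cc_def)
  qed
  then have "\<bar>w\<bar> * \<bar>1 - cc w/(2*L)\<bar> \<le> \<bar>w\<bar> * (3/2)" by (intro mult_left_mono) auto
  then show "\<bar>w - eta * (2 * hfun \<tau> L (cc w) u * w)\<bar> \<le> 3/2 * \<bar>w\<bar>"
    unfolding e abs_mult by (simp add: mult.commute)
qed

definition Rinv where "Rinv i x = (1 \<le> i \<and> i < n \<and> x \<in> blk \<tau> i \<and> \<bar>pb i x\<bar> * \<bar>pa i x\<bar> powr bt \<le> KK)"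
definition Qinv where "Qinv j x = (1 \<le> j \<and> j < n \<and> x \<in> buf \<tau> j \<and> (bw j x \<le> 0 \<longrightarrow> \<bar>bw j x\<bar> \<le> W0) \<and> \<bar>bw j x\<bar> \<le> Wf (bu j x))"
definition Finv where "Finv x = (x \<in> blk \<tau> n \<and> (pb n x = -\<tau>/2 \<longrightarrow> \<bar>pa n x\<bar> \<le> \<tau>/4))"
definition Inv where "Inv x = ((\<exists>i. Rinv i x) \<or> (\<exists>j. Qinv j x) \<or> Finv x)"

lemma c0_lt1: "c0 < 1" by (simp add: c0_def)

lemma W0_le: "W0 \<le> \<tau>/2"
proof -
  have "c0*\<tau> \<le> \<tau>" using c0_le1 tpos c0_pos by (intro mult_left_le_one_le) auto
  then show ?thesis using N1 by simp
qed

lemma Q_small: assumes "Qinv j x" shows "\<bar>bw j x\<bar> \<le> c0*\<tau>/2" "\<bar>bw j x\<bar> < \<tau>/2"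
proof -
  have x: "x \<in> buf \<tau> j" and w: "\<bar>bw j x\<bar> \<le> Wf (bu j x)" using assms by (auto simp: Qinv_def)
  then show "\<bar>bw j x\<bar> \<le> c0*\<tau>/2" using Wf_le buf_iff by (meson order_trans)
  moreover have "c0*\<tau> < \<tau>" using c0_lt1 tpos by simp
  ultimately show "\<bar>bw j x\<bar> < \<tau>/2" by simp
qed

lemma S_R: assumes "Rinv i x" shows "Inv (x - eta *\<^sub>R gblk i x)"
proof -
  define x' where "x' = x - eta *\<^sub>R gblk i x"
  have i: "1 \<le> i" "i < n" and x: "x \<in> blk \<tau> i" and K: "\<bar>pb i x\<bar> * \<bar>pa i x\<bar> powr bt \<le> KK"
    using assms by (auto simp: Rinv_def)
  have ab: "\<bar>pa i x\<bar> \<le> \<tau>/2" "\<bar>pb i x\<bar> \<le> \<tau>/2" using x blk_iff by auto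
  have ni: "i \<noteq> n" using i by simp
  have A': "pa i x' = pa i x - eta * dA (pa i x)" unfolding x'_def by (rule blk_step_coords(1)[OF ni])
  have B': "pb i x' = pb i x - eta * (2*L*pb i x)" unfolding x'_def by (rule blk_step_coords(2)[OF ni])
  note R = R_scalar[OF ab K A' B']
  show ?thesis
  proof (cases "pa i x' \<le> \<tau>/2")
    case True
    with R(1,2) ab have "Rinv i x'" unfolding Rinv_def blk_iff using i by auto
    then show ?thesis unfolding Inv_def x'_def by blast
  next
    case False
    then have h: "\<tau>/2 < pa i x'" by simp
    with R(1,3) have "pa i x' \<le> 3*\<tau>/4" "\<bar>pb i x'\<bar> \<le> W0" by auto
    then have "Qinv i x'" unfolding Qinv_def buf_iff bu_pa bw_pb using i h W0_le W0_pos
      by (auto simp: Wf_def)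
    then show ?thesis unfolding Inv_def x'_def by blast
  qed
qed

lemma S_Q: assumes "Qinv j x" shows "Inv (x - eta *\<^sub>R gbuf j x)"
proof -
  define x' where "x' = x - eta *\<^sub>R gbuf j x"
  have j: "1 \<le> j" "j < n" and x: "x \<in> buf \<tau> j" and q1: "bw j x \<le> 0 \<Longrightarrow> \<bar>bw j x\<bar> \<le> W0"
    and q2: "\<bar>bw j x\<bar> \<le> Wf (bu j x)" using assms by (auto simp: Qinv_def)
  have u: "\<tau> \<le> bu j x" "bu j x \<le> 2*\<tau>" using x buf_iff by auto
  have U: "bu j x' = bu j x - eta * (g1d L \<gamma> \<tau> (bu j x) + hdv \<tau> L (cc (bw j x)) (bu j x) * (bw j x)^2)"
    unfolding x'_def buf_step_coords gU_def ..
  have V: "bw j x' = bw j x - eta * (2 * hfun \<tau> L (cc (bw j x)) (bu j x) * bw j x)"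
    unfolding x'_def buf_step_coords gW_def ..
  note Q = Q_scalar[OF u q1 q2 U V]
  show ?thesis
  proof (cases "bu j x' \<le> 2*\<tau>")
    case True
    with Q(2) have h: "bw j x' \<le> 0 \<longrightarrow> \<bar>bw j x'\<bar> \<le> W0" "\<bar>bw j x'\<bar> \<le> Wf (bu j x')" by auto
    have "\<tau> \<le> bu j x'" using Q(1) u by simp
    then have "Wf (bu j x') \<le> c0*\<tau>/2" using True Wf_le by simp
    moreover have "c0*\<tau> \<le> \<tau>" using c0_le1 tpos c0_pos by (intro mult_left_le_one_le) auto
    ultimately have "\<bar>bw j x'\<bar> \<le> \<tau>/2" using h by simp
    then have "Qinv j x'" unfolding Qinv_def buf_iff using j h True Q(1) u by auto
    then show ?thesis unfolding Inv_def x'_def by blast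
  next
    case False
    with Q(3) have h: "bu j x' \<le> 5*\<tau>/2" "\<bar>bw j x'\<bar> \<le> c0*\<tau>/2" by auto
    have "c0*\<tau> \<le> \<tau>" using c0_le1 tpos c0_pos by (intro mult_left_le_one_le) auto
    then have wl: "\<bar>bw j x'\<bar> \<le> \<tau>/2" using h by simp
    have pb': "\<bar>pb (Suc j) x'\<bar> \<le> \<tau>/2" "pb (Suc j) x' \<noteq> -\<tau>/2" unfolding pb_Suc using h False by auto
    have inb: "x' \<in> blk \<tau> (Suc j)" unfolding blk_iff pa_Suc using wl pb' by simp
    show ?thesis
    proof (cases "Suc j = n")
      case True
      then have "Finv x'" unfolding Finv_def using inb pb' by auto
      then show ?thesis unfolding Inv_def x'_def by blast
    next
      case False
      have "\<bar>pa (Suc j) x'\<bar> powr bt \<le> (c0*\<tau>/2) powr bt"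
        unfolding pa_Suc using h bt_pos by (intro powr_mono2) auto
      then have "\<bar>pb (Suc j) x'\<bar> * \<bar>pa (Suc j) x'\<bar> powr bt \<le> \<tau>/2 * (c0*\<tau>/2) powr bt"
        using pb' by (intro mult_mono) auto
      then have "Rinv (Suc j) x'" unfolding Rinv_def KK_def using inb j False by auto
      then show ?thesis unfolding Inv_def x'_def by blast
    qed
  qed
qed

lemma S_F: assumes "Finv x" shows "Inv (x - eta *\<^sub>R gblk n x)"
proof -
  have x: "x \<in> blk \<tau> n" using assms by (simp add: Finv_def)
  then have "\<bar>pa n x\<bar> \<le> \<tau>/2" "\<bar>pb n x\<bar> \<le> \<tau>/2" using blk_iff by auto
  then have "Finv (x - eta *\<^sub>R gblk n x)" unfolding Finv_def blk_iff fin_step_coords using tpos by auto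
  then show ?thesis unfolding Inv_def by blast
qed

lemma S_Fb: assumes "Finv x" "x \<in> buf \<tau> j" "1 \<le> j" "j < n" shows "Inv (x - eta *\<^sub>R gbuf j x)"
proof -
  define x' where "x' = x - eta *\<^sub>R gbuf j x"
  have x: "x \<in> blk \<tau> n" using assms by (simp add: Finv_def)
  from geo_blk_buf[OF x assms(2)] assms(4) have sj: "Suc j = n" and pb: "pb n x = -\<tau>/2" by auto
  then have pa: "\<bar>pa n x\<bar> \<le> \<tau>/4" using assms(1) by (simp add: Finv_def)
  have u: "bu j x = 2*\<tau>" using pb pb_Suc[of j x] sj by simp
  have w: "bw j x = pa n x" using pa_Suc[of j x] sj by simp
  have U: "bu j x' = 9*\<tau>/4" unfolding x'_def buf_step_coords gU_def using edge_scalar(1)[OF u] by simp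
  have V: "\<bar>bw j x'\<bar> \<le> 3/2 * \<bar>bw j x\<bar>" unfolding x'_def buf_step_coords gW_def using edge_scalar(2)[OF u] by simp
  have "\<bar>pa n x'\<bar> \<le> \<tau>/2" using V pa w pa_Suc[of j x'] sj tpos by simp
  moreover have "pb n x' = -\<tau>/4" using U pb_Suc[of j x'] sj by simp
  ultimately have "Finv x'" unfolding Finv_def blk_iff using tpos by auto
  then show ?thesis unfolding Inv_def x'_def by blast
qed

lemma S_Qn: assumes "Qinv j x" "x \<in> blk \<tau> k" "1 \<le> k" "k \<le> n" shows "Inv (x - eta *\<^sub>R gblk k x)"
proof -
  have x: "x \<in> buf \<tau> j" and j: "1 \<le> j" "j < n" using assms by (auto simp: Qinv_def)
  from geo_blk_buf[OF assms(2) x]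
  consider "j = k" "pa k x = \<tau>/2" | "Suc j = k" "pb k x = -\<tau>/2" by blast
  then show ?thesis
  proof cases
    case 1
    then have "gblk k x = gbuf j x" using E1[of j x] bu_pa[of j x] j by simp
    then show ?thesis using S_Q[OF assms(1)] by simp
  next
    case 2
    have u: "bu j x = 2*\<tau>" using 2 pb_Suc[of j x] by simp
    show ?thesis
    proof (cases "k = n")
      case False
      then have "gblk k x = gbuf j x" using E2[OF u] 2 by simp
      then show ?thesis using S_Q[OF assms(1)] by simp
    next
      case True
      have "\<bar>bw j x\<bar> < \<tau>/2" using Q_small[OF assms(1)] by simp
      then have "Finv (x - eta *\<^sub>R gblk n x)"
        unfolding Finv_def blk_iff fin_step_coords using 2 True pa_Suc[of j x] tpos by auto
      then show ?thesis unfolding Inv_def True by blast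
    qed
  qed
qed

lemma S_Rb: assumes "Rinv i x" "x \<in> buf \<tau> j" shows "Inv (x - eta *\<^sub>R gbuf j x)"
proof -
  have x: "x \<in> blk \<tau> i" and i: "1 \<le> i" "i < n" using assms by (auto simp: Rinv_def)
  from geo_blk_buf[OF x assms(2)]
  consider "j = i" "pa i x = \<tau>/2" | "Suc j = i" "pb i x = -\<tau>/2" by blast
  then have "gbuf j x = gblk i x"
  proof cases
    case 1 then show ?thesis using E1[of j x] bu_pa[of j x] i by simp
  next
    case 2
    have u: "bu j x = 2*\<tau>" using 2 pb_Suc[of j x] by simp
    show ?thesis using E2[OF u] 2 i by simp
  qed
  then show ?thesis using S_R[OF assms(1)] by simp
qed

lemma Inv_D: assumes "Inv x" shows "x \<in> regionD \<tau> n"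
  using assms n2 unfolding Inv_def Rinv_def Qinv_def Finv_def regionD_def by force

lemma Inv_step: assumes "Inv x" "is_grad_field L \<gamma> \<tau> n G" shows "Inv (x - eta *\<^sub>R G x)"
proof -
  have D: "x \<in> regionD \<tau> n" by (rule Inv_D[OF assms(1)])
  from assms(2)[unfolded is_grad_field_def, rule_format, OF D]
  consider (B) k where "k \<in> {1..n}" "x \<in> blk \<tau> k" "(fblk L \<gamma> \<tau> n k has_derivative (\<lambda>h. G x \<bullet> h)) (at x within blk \<tau> k)"
    | (P) j where "j \<in> {1..n-1}" "x \<in> buf \<tau> j" "(fbuf L \<gamma> \<tau> j has_derivative (\<lambda>h. G x \<bullet> h)) (at x within buf \<tau> j)"
    by blast
  then show ?thesis
  proof cases
    case B
    have g: "G x = gblk k x" using G_blk[OF B(2,3)] .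
    have I: "(\<exists>i. Rinv i x) \<or> (\<exists>j. Qinv j x) \<or> Finv x" using assms(1) by (simp add: Inv_def)
    then show ?thesis
    proof (elim disjE exE)
      fix i assume R: "Rinv i x"
      then have "x \<in> blk \<tau> i" by (simp add: Rinv_def)
      then have "i = k" using geo_blk_blk[of x i k] B(2) by simp
      then show ?thesis using S_R[OF R] g by simp
    next
      fix j assume Q: "Qinv j x"
      show ?thesis using S_Qn[OF Q B(2)] B(1) g by simp
    next
      assume F: "Finv x"
      then have "x \<in> blk \<tau> n" by (simp add: Finv_def)
      then have "n = k" using geo_blk_blk[of x n k] B(2) by simp
      then show ?thesis using S_F[OF F] g by simp
    qed
  next
    case P
    have g: "G x = gbuf j x" using G_buf[OF P(2,3)] .
    have j: "1 \<le> j" "j < n" using P(1) n2 by auto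
    have I: "(\<exists>i. Rinv i x) \<or> (\<exists>j. Qinv j x) \<or> Finv x" using assms(1) by (simp add: Inv_def)
    then show ?thesis
    proof (elim disjE exE)
      fix i assume R: "Rinv i x"
      show ?thesis using S_Rb[OF R P(2)] g by simp
    next
      fix j' assume Q: "Qinv j' x"
      then have "j' = j" using geo_buf_buf[of x j' j] Q_small[OF Q] P(2) by (auto simp: Qinv_def)
      then show ?thesis using S_Q[OF Q] g by simp
    next
      assume F: "Finv x"
      show ?thesis using S_Fb[OF F P(2) j] g by simp
    qed
  qed
qed

lemma Inv_init: assumes "x0 \<in> blk \<tau> 1" "\<bar>fst x0 - \<tau>/2\<bar> \<le> \<tau> / (2 * exp 2)"
  shows "Inv x0"
proof -
  have pa: "\<bar>pa 1 x0\<bar> \<le> c0*\<tau>/2" using assms(2) by (simp add: pa_def cs1_def c0_def exp_minus field_simps)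
  have pb: "\<bar>pb 1 x0\<bar> \<le> \<tau>/2" using assms(1) blk_iff by auto
  have "\<bar>pa 1 x0\<bar> powr bt \<le> (c0*\<tau>/2) powr bt" using pa bt_pos by (intro powr_mono2) auto
  then have "\<bar>pb 1 x0\<bar> * \<bar>pa 1 x0\<bar> powr bt \<le> \<tau>/2 * (c0*\<tau>/2) powr bt" using pb by (intro mult_mono) auto
  then have "Rinv 1 x0" unfolding Rinv_def KK_def using assms(1) n2 by auto
  then show ?thesis unfolding Inv_def by blast
qed

end

theorem mainTheorem3:
  fixes L \<gamma> \<tau> :: real and n :: nat
    and G :: "real \<times> real \<Rightarrow> real \<times> real" and x0 :: "real \<times> real"
  assumes "0 < \<gamma>" and "\<gamma> \<le> L" and "0 < \<tau>" and "2 \<le> n"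
    and "is_grad_field L \<gamma> \<tau> n G"
    and "x0 \<in> blk \<tau> 1"
    and "\<bar>fst x0 - \<tau>/2\<bar> \<le> \<tau> / (2 * exp 2)"
  shows "\<forall>t. gd_iter (1 / (4 * L)) G x0 t \<in> regionD \<tau> n"
proof -
  interpret gdc L \<gamma> \<tau> n using assms(1-4) by unfold_locales auto
  have "Inv (gd_iter (1 / (4 * L)) G x0 t)" for t
  proof (induction t)
    case 0
    then show ?case using Inv_init[OF assms(6,7)] by (simp add: gd_iter_def)
  next
    case (Suc t)
    have "gd_iter (1 / (4 * L)) G x0 (Suc t) = (\<lambda>x. x - (1 / (4 * L)) *\<^sub>R G x) (gd_iter (1 / (4 * L)) G x0 t)"
      by (simp add: gd_iter_def)
    then show ?case using Inv_step[OF Suc assms(5)] by simp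
  qed
  then show ?thesis using Inv_D by blast
qed


end
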